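(* Let $\Sigma=I_d$, $\beta_*\in\mathbb{R}^d$, $\sigma^2\ge0$. Define the deterministic equivalents of the min-norm interpolator as follows. If $d<n$: $\mathsf{B}_{\mathsf{R},0}=0$, $\mathsf{V}_{\mathsf{R},0}=\frac{\sigma^2d}{n-d}$, $\mathsf{B}_{\mathsf{N},0}=\|\beta_*\|_2^2$, $\mathsf{V}_{\mathsf{N},0}=\frac{\sigma^2\operatorname{Tr}(\Sigma^{-1})}{n-d}$. If $d>n$, with $\lambda_n>0$ solving $\operatorname{Tr}(\Sigma(\Sigma+\lambda_nI)^{-1})=n$: $\mathsf{B}_{\mathsf{R},0}=\frac{\lambda_n^2\langle\beta_*,\Sigma(\Sigma+\lambda_nI)^{-2}\beta_*\rangle}{1-n^{-1}\operatorname{Tr}(\Sigma^2(\Sigma+\lambda_nI)^{-2})}$, $\mathsf{V}_{\mathsf{R},0}=\frac{\sigma^2\operatorname{Tr}(\Sigma^2(\Sigma+\lambda_nI)^{-2})}{n-\operatorname{Tr}(\Sigma^2(\Sigma+\lambda_nI)^{-2})}$, $\mathsf{B}_{\mathsf{N},0}=\langle\beta_*,\Sigma(\Sigma+\lambda_nI)^{-1}\beta_*\rangle$, $\mathsf{V}_{\mathsf{N},0}=\frac{\sigma^2\operatorname{Tr}(\Sigma(\Sigma+\lambda_nI)^{-2})}{n-\operatorname{Tr}(\Sigma^2(\Sigma+\lambda_nI)^{-2})}$. Let $\mathsf{R}_0=\mathsf{B}_{\mathsf{R},0}+\mathsf{V}_{\mathsf{R},0}$ and $\mathsf{N}_0=\mathsf{B}_{\mathsf{N},0}+\mathsf{V}_{\mathsf{N},0}$.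 Then $$\mathsf{R}_0=\begin{cases}\mathsf{N}_0-\|\beta_*\|_2^2,& d<n,\\ \sqrt{\big[\mathsf{N}_0-(\|\beta_*\|_2^2-\sigma^2)\big]^2+4\|\beta_*\|_2^2\sigma^2}-\sigma^2,& d>n.\end{cases}$$ Moreover, in both regimes $\mathsf{V}_{\mathsf{R},0}=\mathsf{V}_{\mathsf{N},0}$ and $\mathsf{B}_{\mathsf{R},0}+\mathsf{B}_{\mathsf{N},0}=\|\beta_*\|_2^2$.
   Context: These are deterministic equivalents of the bias/variance of the test risk $\mathbb{E}_\varepsilon\|\beta_*-\hat\beta_{\min}\|_\Sigma^2$ and of the squared norm $\mathbb{E}_\varepsilon\|\hat\beta_{\min}\|_2^2$ for the minimum-$\ell_2$-norm interpolator $\hat\beta_{\min}$ in linear regression with $n$ samples, dimension $d$, covariance $\Sigma$, noise variance $\sigma^2$; they are defined directly by the formulas in the claim. *)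

theory Defs
  imports "HOL-Analysis.Analysis"
begin

definition resolv :: "real^'d^'d \<Rightarrow> real \<Rightarrow> real^'d^'d" where
  "resolv S l = matrix_inv (S + l *\<^sub>R mat 1)"

definition lam_n :: "real^'d^'d \<Rightarrow> nat \<Rightarrow> real" where
  "lam_n S n = (THE l. l > 0 \<and> trace (S ** resolv S l) = real n)"

definition BR0 :: "real^'d^'d \<Rightarrow> real^'d \<Rightarrow> real \<Rightarrow> nat \<Rightarrow> real" where
  "BR0 S b s2 n =
    (if CARD('d) < n then 0
     else (let l = lam_n S n; R = resolv S l in
       l^2 * (b \<bullet> ((S ** R ** R) *v b))
       / (1 - trace (S ** S ** R ** R) / real n)))"

definition VR0 :: "real^'d^'d \<Rightarrow> real^'d \<Rightarrow> real \<Rightarrow> nat \<Rightarrow> real" where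
  "VR0 S b s2 n =
    (if CARD('d) < n then s2 * real CARD('d) / (real n - real CARD('d))
     else (let l = lam_n S n; R = resolv S l in
       s2 * trace (S ** S ** R ** R) / (real n - trace (S ** S ** R ** R))))"

definition BN0 :: "real^'d^'d \<Rightarrow> real^'d \<Rightarrow> real \<Rightarrow> nat \<Rightarrow> real" where
  "BN0 S b s2 n =
    (if CARD('d) < n then (norm b)^2
     else (let l = lam_n S n; R = resolv S l in
       b \<bullet> ((S ** R) *v b)))"

definition VN0 :: "real^'d^'d \<Rightarrow> real^'d \<Rightarrow> real \<Rightarrow> nat \<Rightarrow> real" where
  "VN0 S b s2 n =
    (if CARD('d) < n then s2 * trace (matrix_inv S) / (real n - real CARD('d))
     else (let l = lam_n S n; R = resolv S l in
       s2 * trace (S ** R ** R) / (real n - trace (S ** S ** R ** R))))"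

definition R0 :: "real^'d^'d \<Rightarrow> real^'d \<Rightarrow> real \<Rightarrow> nat \<Rightarrow> real" where
  "R0 S b s2 n = BR0 S b s2 n + VR0 S b s2 n"

definition N0 :: "real^'d^'d \<Rightarrow> real^'d \<Rightarrow> real \<Rightarrow> nat \<Rightarrow> real" where
  "N0 S b s2 n = BN0 S b s2 n + VN0 S b s2 n"

end

theory Submission
  imports Defs
begin
lemma mat_mul_mat: "(mat a :: real^'d^'d) ** mat b = mat (a*b)"
  by (simp add: vec_eq_iff matrix_matrix_mult_def mat_def if_distrib[of "\<lambda>x. x * _"] cong: if_cong)
lemma mat_inv_mat: assumes "a \<noteq> 0" shows "matrix_inv (mat a :: real^'d^'d) = mat (1/a)"
proof -
  have ex: "\<exists>A'. (mat a :: real^'d^'d) ** A' = mat 1 \<and> A' ** mat a = mat 1"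
    by (rule exI[of _ "mat (1/a)"]) (simp add: mat_mul_mat assms)
  let ?B = "matrix_inv (mat a :: real^'d^'d)"
  have B: "mat a ** ?B = mat 1 \<and> ?B ** mat a = mat 1"
    unfolding matrix_inv_def by (rule someI_ex[OF ex])
  have "?B = ?B ** (mat a ** mat (1/a))" using assms by (simp add: mat_mul_mat)
  also have "\<dots> = (?B ** mat a) ** mat (1/a)" by (simp add: matrix_mul_assoc)
  also have "\<dots> = mat (1/a)" using B by simp
  finally show ?thesis .
qed
lemma resolvI: assumes "l > -1" shows "resolv (mat 1 :: real^'d^'d) l = mat (1/(1+l))"
proof -
  have "(mat 1 :: real^'d^'d) + l *\<^sub>R mat 1 = mat (1+l)"
    by (simp add: vec_eq_iff mat_def)
  thus ?thesis unfolding resolv_def using assms by (simp add: mat_inv_mat)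
qed
lemma trace_mat: "trace (mat a :: real^'d^'d) = a * CARD('d)"
  by (simp add: trace_def mat_def)
lemma lam: assumes "CARD('d) > n" "n \<ge> 1"
  shows "lam_n (mat 1 :: real^'d^'d) n = real CARD('d) / n - 1"
proof -
  let ?d = "real CARD('d)"
  have P: "l > 0 \<and> trace ((mat 1 :: real^'d^'d) ** resolv (mat 1) l) = real n \<longleftrightarrow> l = ?d / n - 1" for l
  proof
    assume h: "l > 0 \<and> trace ((mat 1 :: real^'d^'d) ** resolv (mat 1) l) = real n"
    have "resolv (mat 1 :: real^'d^'d) l = mat (1/(1+l))" using h by (intro resolvI) simp
    hence "?d / (1+l) = n" using h by (simp add: trace_mat)
    thus "l = ?d / n - 1" using h assms by (simp add: field_simps)
  next
    assume h: "l = ?d / n - 1"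
    have "?d / n > 1" using assms by (simp add: field_simps)
    hence lp: "l > 0" using h by simp
    moreover have "?d / (1+l) = n" using h assms lp by (simp add: field_simps)
    ultimately show "l > 0 \<and> trace ((mat 1 :: real^'d^'d) ** resolv (mat 1) l) = real n"
      by (simp add: resolvI trace_mat)
  qed
  show ?thesis unfolding lam_n_def P by simp
qed

lemma mat_vec: "(mat a :: real^'d^'d) *v b = a *\<^sub>R b"
  by (simp add: vec_eq_iff matrix_vector_mult_def mat_def if_distrib[of "\<lambda>x. x * _"] cong: if_cong)
lemma inner_sc: "(b::real^'d) \<bullet> (a *\<^sub>R b) = a * (norm b)^2"
  by (simp add: power2_norm_eq_inner)
theorem corollary6:
  fixes beta :: "real^'d" and s2 :: real and n :: nat
  assumes "s2 \<ge> 0" and "n \<ge> 1"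
  shows "(CARD('d) < n \<longrightarrow>
            R0 (mat 1) beta s2 n = N0 (mat 1) beta s2 n - (norm beta)^2)
       \<and> (CARD('d) > n \<longrightarrow>
            R0 (mat 1) beta s2 n =
              sqrt ((N0 (mat 1) beta s2 n - ((norm beta)^2 - s2))^2
                    + 4 * (norm beta)^2 * s2) - s2)
       \<and> (CARD('d) \<noteq> n \<longrightarrow>
            VR0 (mat 1) beta s2 n = VN0 (mat 1) beta s2 n
            \<and> BR0 (mat 1) beta s2 n + BN0 (mat 1) beta s2 n = (norm beta)^2)"
proof (cases "CARD('d) < n")
  case True
  have inv1: "matrix_inv (mat 1 :: real^'d^'d) = mat 1" using mat_inv_mat[of 1] by simp
  show ?thesis using True
    by (simp add: R0_def N0_def BR0_def VR0_def BN0_def VN0_def inv1 trace_mat)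
next
  case False
  show ?thesis
  proof (cases "CARD('d) = n")
    case True thus ?thesis using False by simp
  next
    case F2: False
    hence gt: "CARD('d) > n" using False by simp
    define d where "d = real CARD('d)"
    define B where "B = (norm beta)^2"
    have dn: "d > n" using gt by (simp add: d_def)
    have n0: "real n > 0" using assms by simp
    have L: "lam_n (mat 1 :: real^'d^'d) n = d / n - 1" using lam[OF gt assms(2)] by (simp add: d_def)
    have Lp: "d / n - 1 > -1" using dn n0 by simp
    have R: "resolv (mat 1 :: real^'d^'d) (d/n - 1) = mat (n/d)"
      using resolvI[OF Lp] dn n0 by simp
    have BR: "BR0 (mat 1) beta s2 n = (1 - n/d) * B"
    proof -
      have "BR0 (mat 1) beta s2 n = (d/n-1)^2 * ((n/d)^2 * B) / (1 - (n/d)^2 * d / n)"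
        using gt unfolding BR0_def L R Let_def
        by (simp add: mat_mul_mat mat_vec inner_sc trace_mat B_def d_def power2_eq_square)
          (metis power2_eq_square power2_norm_eq_inner)
      also have "\<dots> = (1 - n/d) * B" using dn n0 by (simp add: field_simps power2_eq_square)
      finally show ?thesis .
    qed
    have BN: "BN0 (mat 1) beta s2 n = (n/d) * B"
      using gt unfolding BN0_def L R Let_def
      by (simp add: mat_mul_mat mat_vec inner_sc trace_mat B_def d_def power2_norm_eq_inner)
    have VR: "VR0 (mat 1) beta s2 n = s2 * n / (d - n)"
    proof -
      have "VR0 (mat 1) beta s2 n = s2 * ((n/d)^2 * d) / (n - (n/d)^2 * d)"
        using gt unfolding VR0_def L R Let_def
        by (simp add: mat_mul_mat trace_mat d_def power2_eq_square)
      also have "\<dots> = s2 * n / (d - n)" using dn n0 by (simp add: field_simps power2_eq_square)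
      finally show ?thesis .
    qed
    have VN: "VN0 (mat 1) beta s2 n = s2 * n / (d - n)"
    proof -
      have "VN0 (mat 1) beta s2 n = s2 * ((n/d)^2 * d) / (n - (n/d)^2 * d)"
        using gt unfolding VN0_def L R Let_def
        by (simp add: mat_mul_mat trace_mat d_def power2_eq_square)
      also have "\<dots> = s2 * n / (d - n)" using dn n0 by (simp add: field_simps power2_eq_square)
      finally show ?thesis .
    qed
    define a where "a = n/d"
    have a1: "a < 1" "a > 0" using dn n0 by (auto simp: a_def)
    have v: "s2 * n / (d - n) = s2 * a / (1 - a)" using dn n0 by (simp add: a_def field_simps)
    have B0: "B \<ge> 0" by (simp add: B_def)
    have key: "sqrt ((a*B + s2*a/(1-a) - (B - s2))^2 + 4 * B * s2) - s2 = (1-a)*B + s2*a/(1-a)"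
    proof -
      have e: "(a*B + s2*a/(1-a) - (B - s2))^2 + 4 * B * s2 = ((1-a)*B + s2*a/(1-a) + s2)^2"
      proof -
        have c: "1 - a \<noteq> 0" using a1 by simp
        have e1: "a*B + s2*a/(1-a) - (B - s2) = s2/(1-a) - (1-a)*B" using c by (simp add: field_simps)
        have e2: "(1-a)*B + s2*a/(1-a) + s2 = s2/(1-a) + (1-a)*B" using c by (simp add: field_simps)
        have e3: "(s2/(1-a)) * ((1-a)*B) = s2 * B" using c by simp
        have g: "(X - Y)^2 + 4 * (X * Y) = (X + Y)^2" for X Y :: real by algebra
        show ?thesis unfolding e1 e2 using g[of "s2/(1-a)" "(1-a)*B"] e3 by (simp add: mult_ac)
      qed
      have "(1-a)*B + s2*a/(1-a) + s2 \<ge> 0" using a1 B0 assms(1) by simp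
      thus ?thesis unfolding e by simp
    qed
    show ?thesis using gt key unfolding R0_def N0_def BR BN VR VN v a_def[symmetric] B_def[symmetric]
      by (simp add: algebra_simps)
  qed
qed
end
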